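(* Let $0<k<n$ and $d$ be integers, and let $A_c=(\alpha_c,n_1,d_1,k_1,n_2,d_2,k_2)$ be an allowable critical data set for type $(n,d,k)$ with $k_2=0$. Then $C_{12}>0$ and $C_{21}>0$.
   Context: Write $d=na-t$ with integers $a,t$, $0\le t<n$, and $ka=l(n-k)+t+m$ with integers $l,m$, $0\le m<n-k$. A critical data set for type $(n,d,k)$ is a tuple $A_c=(\alpha_c,n_1,d_1,k_1,n_2,d_2,k_2)$ with integers $n_i\ge1$, $k_i\ge0$, $d_i$ such that $n_1+n_2=n$, $d_1+d_2=d$, $k_1+k_2=k$, $\frac{d_2}{n_2}>\frac{d_1}{n_1}$, $\frac{k_1}{n_1}>\frac{k_2}{n_2}$, and $\alpha_c=\frac{d_2n_1-d_1n_2}{n_2k_1-n_1k_2}$. It is allowable if moreover $\frac tk<\alpha_c<\frac{ln+t}{k}$, $d\ge\frac1k(n^2-1)-(n-k)$, $d_1\ge\frac1{k_1}(n_1^2-1)-(n_1-k_1)$, and either ($k_2=0$ and $n_2=1$) or ($k_2\ge1$ and $d_2\ge\frac1{k_2}(n_2^2-1)-(n_2-k_2)$). Define $C_{12}=-n_1n_2-d_2n_1+d_1n_2+k_1(d_2+n_2-k_2)$ and $C_{21}=-n_1n_2+d_2n_1-d_1n_2+k_2(d_1+n_1-k_1)$. *)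

theory Defs
  imports Complex_Main
begin

definition critical_data_set ::
  "int \<Rightarrow> int \<Rightarrow> int \<Rightarrow> real \<Rightarrow> int \<Rightarrow> int \<Rightarrow> int \<Rightarrow> int \<Rightarrow> int \<Rightarrow> int \<Rightarrow> bool" where
  "critical_data_set n d k \<alpha> n1 d1 k1 n2 d2 k2 \<longleftrightarrow>
     n1 \<ge> 1 \<and> n2 \<ge> 1 \<and> k1 \<ge> 0 \<and> k2 \<ge> 0 \<and>
     n1 + n2 = n \<and> d1 + d2 = d \<and> k1 + k2 = k \<and>
     real_of_int d2 / real_of_int n2 > real_of_int d1 / real_of_int n1 \<and>
     real_of_int k1 / real_of_int n1 > real_of_int k2 / real_of_int n2 \<and>
     \<alpha> = real_of_int (d2 * n1 - d1 * n2) / real_of_int (n2 * k1 - n1 * k2)"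

text \<open>Allowable critical data set; t and l are the integers attached to (n,d,k)
  by d = n a - t (0 <= t < n) and k a = l (n-k) + t + m (0 <= m < n-k).\<close>
definition allowable ::
  "int \<Rightarrow> int \<Rightarrow> int \<Rightarrow> int \<Rightarrow> int \<Rightarrow> real \<Rightarrow> int \<Rightarrow> int \<Rightarrow> int \<Rightarrow> int \<Rightarrow> int \<Rightarrow> int \<Rightarrow> bool" where
  "allowable n d k t l \<alpha> n1 d1 k1 n2 d2 k2 \<longleftrightarrow>
     critical_data_set n d k \<alpha> n1 d1 k1 n2 d2 k2 \<and>
     real_of_int t / real_of_int k < \<alpha> \<and>
     \<alpha> < real_of_int (l * n + t) / real_of_int k \<and>
     real_of_int d \<ge> (real_of_int n ^ 2 - 1) / real_of_int k - real_of_int (n - k) \<and>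
     real_of_int d1 \<ge> (real_of_int n1 ^ 2 - 1) / real_of_int k1 - real_of_int (n1 - k1) \<and>
     ((k2 = 0 \<and> n2 = 1) \<or>
      (k2 \<ge> 1 \<and> real_of_int d2 \<ge> (real_of_int n2 ^ 2 - 1) / real_of_int k2 - real_of_int (n2 - k2)))"

definition C12 :: "int \<Rightarrow> int \<Rightarrow> int \<Rightarrow> int \<Rightarrow> int \<Rightarrow> int \<Rightarrow> int" where
  "C12 n1 d1 k1 n2 d2 k2 = - n1 * n2 - d2 * n1 + d1 * n2 + k1 * (d2 + n2 - k2)"

definition C21 :: "int \<Rightarrow> int \<Rightarrow> int \<Rightarrow> int \<Rightarrow> int \<Rightarrow> int \<Rightarrow> int" where
  "C21 n1 d1 k1 n2 d2 k2 = - n1 * n2 + d2 * n1 - d1 * n2 + k2 * (d1 + n1 - k1)"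

end

theory Submission
  imports Defs
begin

theorem proposition5p1:
  fixes n d k a t l m n1 d1 k1 n2 d2 k2 :: int and \<alpha> :: real
  assumes "0 < k" and "k < n"
    and "d = n * a - t" and "0 \<le> t" and "t < n"
    and "k * a = l * (n - k) + t + m" and "0 \<le> m" and "m < n - k"
    and "allowable n d k t l \<alpha> n1 d1 k1 n2 d2 k2"
    and "k2 = 0"
  shows "C12 n1 d1 k1 n2 d2 k2 > 0 \<and> C21 n1 d1 k1 n2 d2 k2 > 0"
proof -
  have A: "critical_data_set n d k \<alpha> n1 d1 k1 n2 d2 k2"
    and lo: "real_of_int t / real_of_int k < \<alpha>"
    and hi: "\<alpha> < real_of_int (l * n + t) / real_of_int k"
    and n2: "n2 = 1"
    using assms(9,10) unfolding allowable_def by auto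
  have s: "n1 + 1 = n" "d1 + d2 = d" "k1 = k"
    and al: "\<alpha> = real_of_int (d2 * n1 - d1 * n2) / real_of_int (n2 * k1 - n1 * k2)"
    using A n2 assms(10) unfolding critical_data_set_def by auto
  define X where "X = d2 * n1 - d1"
  have al2: "\<alpha> = real_of_int X / real_of_int k" using al s n2 assms(10) X_def by simp
  have kpos: "real_of_int k > 0" using assms(1) by simp
  have "real_of_int t < real_of_int X" using lo al2 kpos by (simp add: divide_strict_right_mono_neg divide_less_cancel)
  hence t1: "t < X" by simp
  have "real_of_int X < real_of_int (l * n + t)" using hi al2 kpos by (simp add: divide_less_cancel)
  hence t2: "X < l * n + t" by linarith
  have Xe: "X = n * (d2 - a) + t" proof -
    have "d1 = d - d2" "n1 = n - 1" using s by auto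
    hence "X = d2 * (n - 1) - (d - d2)" unfolding X_def by simp
    also have "... = n * (d2 - a) + t" using assms(3) by (simp add: algebra_simps)
    finally show ?thesis .
  qed
  have j1: "d2 - a \<ge> 1"
  proof (rule ccontr)
    assume "\<not> d2 - a \<ge> 1" hence "d2 - a \<le> 0" by simp
    hence "n * (d2 - a) \<le> 0" using assms(1,2) by (simp add: mult_nonneg_nonpos)
    thus False using t1 Xe by simp
  qed
  have j2: "d2 - a \<le> l - 1"
  proof (rule ccontr)
    assume "\<not> d2 - a \<le> l - 1" hence "d2 - a \<ge> l" by simp
    hence "n * (d2 - a) \<ge> n * l" using assms(1,2) by (simp add: mult_left_mono)
    thus False using t2 Xe by (simp add: algebra_simps)
  qed
  have c21: "C21 n1 d1 k1 n2 d2 k2 = X - n1" unfolding C21_def X_def using n2 assms(10) by simp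
  have "n * (d2 - a) \<ge> n" using j1 assms(1,2) using mult_left_mono[of 1 "d2 - a" n] by simp
  hence p1: "C21 n1 d1 k1 n2 d2 k2 > 0" using c21 Xe s assms(4) by simp
  define j where "j = d2 - a"
  have c12a: "C12 n1 d1 k1 n2 d2 k2 = k * d2 + k - X - n1"
    unfolding C12_def X_def using n2 assms(10) s by (simp add: algebra_simps)
  have c12b: "k * d2 = k * a + k * j" unfolding j_def by (simp add: algebra_simps)
  have c12c: "(n - k) * (l - (d2 - a) - 1) = l * (n - k) - n * j + k * j - n + k"
    unfolding j_def by (simp add: algebra_simps)
  have c12: "C12 n1 d1 k1 n2 d2 k2 = (n - k) * (l - (d2 - a) - 1) + m + 1"
    using c12a c12b c12c assms(6) Xe s(1) unfolding j_def[symmetric] by linarith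
  have "(n - k) * (l - (d2 - a) - 1) \<ge> 0" using j2 assms(2) by simp
  hence p2: "C12 n1 d1 k1 n2 d2 k2 > 0" using c12 assms(7) by simp
  show ?thesis using p1 p2 by simp
qed

end
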